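(* For every weak composition $a$ of length $n$, \[\mathfrak{F}_a=\sum_{\substack{b\ge a\\ \mathrm{flat}(b)=\mathrm{flat}(a)}}\mathfrak{L}_b,\] where $b$ ranges over weak compositions of length $n$.
   Context: Weak composition of length $n$: sequence of $n$ nonnegative integers; $\mathrm{flat}(a)$ deletes zero parts; $b\ge a$ means $b_1+\cdots+b_i\ge a_1+\cdots+a_i$ for all $i$. $\mathfrak{F}_a=\sum x^c$ over weak compositions $c$ of length $n$ with $c\ge a$ and $\mathrm{flat}(c)$ refining $\mathrm{flat}(a)$ (i.e. $\mathrm{flat}(a)$ is obtained by summing consecutive parts of $\mathrm{flat}(c)$). A local move replaces consecutive entries $(0,k)$ at positions $p,p+1$ by $(i,j)$ with $i+j=k$, $i,j\ge0$; a fixed slide of $b$ is obtained from $b$ by a (possibly empty) sequence of local moves with $j>0$ required whenever $b_{p+1}\ne0$. $\mathfrak{L}_b=\sum x^c$ over the set of fixed slides $c$ of $b$. *)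

theory Defs
  imports Main "HOL-Library.Function_Algebras"
begin

(* A polynomial with integer coefficients in x_1..x_n is represented by its
   coefficient function on exponent vectors (nat list => int); x^c is the
   indicator of c, a sum \<Sum> x^c over a set S of exponents is the indicator of S,
   and sums of polynomials are pointwise sums. *)

definition flat :: "nat list \<Rightarrow> nat list" where
  "flat a = filter (\<lambda>x. x \<noteq> 0) a"

definition dominates :: "nat list \<Rightarrow> nat list \<Rightarrow> bool" where
  "dominates b a \<longleftrightarrow> (\<forall>i. sum_list (take i b) \<ge> sum_list (take i a))"

definition refines :: "nat list \<Rightarrow> nat list \<Rightarrow> bool" where
  "refines beta alpha \<longleftrightarrow>
     (\<exists>ls. concat ls = beta \<and> (\<forall>l\<in>set ls. l \<noteq> []) \<and> map sum_list ls = alpha)"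

definition monomial_sum :: "nat list set \<Rightarrow> (nat list \<Rightarrow> int)" where
  "monomial_sum S = (\<lambda>c. if c \<in> S then 1 else 0)"

definition fund_slide_set :: "nat list \<Rightarrow> nat list set" where
  "fund_slide_set a = {c. length c = length a \<and> dominates c a \<and> refines (flat c) (flat a)}"

definition fund_slide :: "nat list \<Rightarrow> (nat list \<Rightarrow> int)" where
  "fund_slide a = monomial_sum (fund_slide_set a)"

definition local_move :: "nat list \<Rightarrow> nat list \<Rightarrow> nat list \<Rightarrow> bool" where
  "local_move b c c' \<longleftrightarrow>
     (\<exists>p i j. Suc p < length c \<and> c ! p = 0 \<and> i + j = c ! Suc p \<and>
        (b ! Suc p \<noteq> 0 \<longrightarrow> j > 0) \<and>
        c' = c[p := i, Suc p := j])"

definition fixed_slides :: "nat list \<Rightarrow> nat list set" where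
  "fixed_slides b = {c. (local_move b)\<^sup>*\<^sup>* b c}"

definition lock :: "nat list \<Rightarrow> (nat list \<Rightarrow> int)" where
  "lock b = monomial_sum (fixed_slides b)"

end

theory Submission
  imports Defs
begin

definition psum :: "nat list \<Rightarrow> nat \<Rightarrow> nat" where
  "psum x i = sum_list (take i x)"

definition PS :: "nat list \<Rightarrow> nat set" where
  "PS x = range (psum x)"

lemma psum_0[simp]: "psum x 0 = 0" by (simp add: psum_def)

lemma psum_Suc: "i < length x \<Longrightarrow> psum x (Suc i) = psum x i + x ! i"
  by (simp add: psum_def take_Suc_conv_app_nth)

lemma psum_ge: "length x \<le> i \<Longrightarrow> psum x i = sum_list x"
  by (simp add: psum_def)

lemma psum_add: "psum x (j + k) = psum x j + psum (drop j x) k"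
  by (simp add: psum_def take_add)

lemma psum_mono: "i \<le> j \<Longrightarrow> psum x i \<le> psum x j"
  using psum_add[of x i "j - i"] by simp

lemma psum_Cons_Suc[simp]: "psum (y # ys) (Suc i) = y + psum ys i"
  by (simp add: psum_def)

lemma psum_min: "psum x (min i (length x)) = psum x i"
  by (simp add: psum_def min_def)

lemma psum_in_PS[simp]: "psum x i \<in> PS x" by (simp add: PS_def)

lemma zero_in_PS[simp]: "0 \<in> PS x" using psum_in_PS[of x 0] by simp

lemma finite_PS[simp]: "finite (PS x)"
proof -
  have "PS x \<subseteq> psum x ` {..length x}"
    unfolding PS_def using psum_min by (metis image_eqI image_subsetI atMost_iff min.cobounded2)
  then show ?thesis by (rule finite_subset) simp
qed

lemma PS_Cons: "PS (y # ys) = insert 0 ((+) y ` PS ys)"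
proof (rule set_eqI)
  fix v show "v \<in> PS (y # ys) \<longleftrightarrow> v \<in> insert 0 ((+) y ` PS ys)"
    unfolding PS_def
  proof
    assume "v \<in> range (psum (y # ys))"
    then obtain i where "v = psum (y#ys) i" by auto
    then show "v \<in> insert 0 ((+) y ` range (psum ys))" by (cases i) auto
  next
    assume "v \<in> insert 0 ((+) y ` range (psum ys))"
    then show "v \<in> range (psum (y # ys))"
      by (auto intro: range_eqI[of _ _ 0] range_eqI[of _ _ "Suc _"])
  qed
qed

lemma PS_flat: "PS (flat x) = PS x"
proof (induction x)
  case Nil then show ?case by (simp add: flat_def)
next
  case (Cons y ys)
  show ?case
  proof (cases "y = 0")
    case True
    then have "PS (flat (y # ys)) = PS ys" using Cons by (simp add: flat_def)
    moreover have "PS (y # ys) = PS ys" using True by (simp add: PS_Cons insert_absorb)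
    ultimately show ?thesis by simp
  next
    case False
    then show ?thesis using Cons by (simp add: flat_def PS_Cons)
  qed
qed

lemma sum_flat: "sum_list (flat x) = sum_list x"
  by (induction x) (auto simp: flat_def)

lemma flat_pos: "v \<in> set (flat x) \<Longrightarrow> v > 0"
  by (auto simp: flat_def)

lemma psum_eq_list:
  assumes "length x = length y" "\<And>i. psum x i = psum y i"
  shows "x = y"
proof (rule nth_equalityI)
  show "length x = length y" by fact
  fix i assume "i < length x"
  then show "x ! i = y ! i" using psum_Suc[of i x] psum_Suc[of i y] assms by simp
qed


lemma PS_append: "(+) (sum_list xs) ` PS ys \<subseteq> PS (xs @ ys)"
proof
  fix v assume "v \<in> (+) (sum_list xs) ` PS ys"
  then obtain k where "v = sum_list xs + psum ys k" by (auto simp: PS_def)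
  then have "v = psum (xs @ ys) (length xs + k)" using psum_add[of "xs @ ys" "length xs" k]
    by (simp add: psum_def)
  then show "v \<in> PS (xs @ ys)" by simp
qed

lemma refines_imp:
  assumes "refines beta alpha"
  shows "sum_list beta = sum_list alpha \<and> PS alpha \<subseteq> PS beta"
proof -
  obtain ls where ls: "concat ls = beta" "map sum_list ls = alpha"
    using assms unfolding refines_def by blast
  have "sum_list (concat ls) = sum_list (map sum_list ls) \<and> PS (map sum_list ls) \<subseteq> PS (concat ls)"
  proof (induction ls)
    case Nil then show ?case by simp
  next
    case (Cons l ls)
    have "PS (map sum_list (l # ls)) = insert 0 ((+) (sum_list l) ` PS (map sum_list ls))"
      by (simp add: PS_Cons)
    also have "\<dots> \<subseteq> insert 0 ((+) (sum_list l) ` PS (concat ls))" using Cons by auto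
    also have "\<dots> \<subseteq> PS (l @ concat ls)" using PS_append[of l "concat ls"] by simp
    finally show ?case using Cons by simp
  qed
  then show ?thesis using ls by simp
qed

lemma imp_refines:
  assumes "\<forall>v\<in>set alpha. v > 0" "\<forall>v\<in>set beta. v > 0"
    "sum_list beta = sum_list alpha" "PS alpha \<subseteq> PS beta"
  shows "refines beta alpha"
  using assms
proof (induction alpha arbitrary: beta)
  case Nil
  then have "beta = []" by (cases beta) auto
  then show ?case unfolding refines_def by (intro exI[of _ "[]"]) simp
next
  case (Cons x alpha')
  have "x \<in> PS (x # alpha')" using psum_in_PS[of "x # alpha'" 1] by simp
  then obtain j where j: "psum beta j = x" using Cons.prems(4) by (auto simp: PS_def)
  have xpos: "x > 0" using Cons.prems(1) by simp
  let ?d = "drop j beta"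
  have IH: "refines ?d alpha'"
  proof (rule Cons.IH)
    show "\<forall>v\<in>set alpha'. 0 < v" using Cons.prems(1) by simp
    show "\<forall>v\<in>set ?d. 0 < v" using Cons.prems(2) by (meson in_set_dropD)
    have "sum_list beta = psum beta j + sum_list ?d"
      by (metis append_take_drop_id psum_def sum_list_append)
    then show "sum_list ?d = sum_list alpha'" using Cons.prems(3) j by simp
    show "PS alpha' \<subseteq> PS ?d"
    proof
      fix y assume y: "y \<in> PS alpha'"
      show "y \<in> PS ?d"
      proof (cases "y = 0")
        case True then show ?thesis by simp
      next
        case False
        have "x + y \<in> PS (x # alpha')" using y by (simp add: PS_Cons)
        then obtain k where k: "psum beta k = x + y" using Cons.prems(4) by (auto simp: PS_def)
        have "\<not> k \<le> j" using psum_mono[of k j beta] k j False by auto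
        then have "psum beta k = psum beta j + psum ?d (k - j)"
          using psum_add[of beta j "k - j"] by simp
        then have "y = psum ?d (k - j)" using j k by simp
        then show ?thesis by simp
      qed
    qed
  qed
  then obtain ls where ls: "concat ls = ?d" "\<forall>l\<in>set ls. l \<noteq> []" "map sum_list ls = alpha'"
    unfolding refines_def by blast
  have "take j beta \<noteq> []" using j xpos unfolding psum_def by (metis sum_list.Nil neq0_conv)
  moreover have "sum_list (take j beta) = x" using j by (simp add: psum_def)
  ultimately show ?case unfolding refines_def using ls
    by (intro exI[of _ "take j beta # ls"]) simp
qed

lemma refines_flat_iff:
  "refines (flat c) (flat a) \<longleftrightarrow> sum_list c = sum_list a \<and> PS a \<subseteq> PS c"
proof
  assume "refines (flat c) (flat a)"
  then show "sum_list c = sum_list a \<and> PS a \<subseteq> PS c"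
    using refines_imp[of "flat c" "flat a"] by (simp add: PS_flat sum_flat)
next
  assume "sum_list c = sum_list a \<and> PS a \<subseteq> PS c"
  then show "refines (flat c) (flat a)"
    using imp_refines[of "flat a" "flat c"] flat_pos by (simp add: PS_flat sum_flat)
qed


definition slideP :: "nat list \<Rightarrow> nat list \<Rightarrow> bool" where
  "slideP b c \<longleftrightarrow> length c = length b \<and> (\<forall>i. psum b i \<le> psum c i) \<and>
     (\<forall>i<length b. b ! i \<noteq> 0 \<longrightarrow> c ! i \<noteq> 0 \<and> psum c (Suc i) = psum b (Suc i)) \<and>
     sum_list c = sum_list b"

lemma psum_move:
  assumes "Suc p < length c" "c ! p = 0" "i + j = c ! Suc p"
  shows "psum (c[p := i, Suc p := j]) k = (if k = Suc p then psum c k + i else psum c k)"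
proof -
  define u where "u = take p c"
  define w where "w = drop (Suc (Suc p)) c"
  have lu: "length u = p" using assms(1) by (simp add: u_def)
  have c: "c = u @ 0 # (i + j) # w"
    using assms unfolding u_def w_def
    by (metis Cons_nth_drop_Suc Suc_lessD append_take_drop_id)
  have c': "c[p := i, Suc p := j] = u @ i # j # w"
    using lu by (simp add: c list_update_append)
  have A: "psum (u @ v) k = psum u k + psum v (k - length u)" for v
    by (simp add: psum_def)
  have B: "psum (x # y # w) m = (if m = 0 then 0 else if m = 1 then x else x + y + psum w (m - 2))" for x y m
    by (cases m; cases "m - 1") (auto simp: psum_def)
  have L: "psum (c[p := i, Suc p := j]) k = psum u k + psum (i # j # w) (k - p)"
    by (simp add: c' A lu)
  have R: "psum c k = psum u k + psum (0 # (i + j) # w) (k - p)"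
    using A[of "0 # (i + j) # w"] lu c by simp
  show ?thesis unfolding L R B by auto
qed

lemma slideP_move:
  assumes "slideP b c" "local_move b c c'"
  shows "slideP b c'"
proof -
  obtain p i j where m: "Suc p < length c" "c ! p = 0" "i + j = c ! Suc p"
    "b ! Suc p \<noteq> 0 \<longrightarrow> j > 0" "c' = c[p := i, Suc p := j]"
    using assms(2) unfolding local_move_def by blast
  have ps: "psum c' k = (if k = Suc p then psum c k + i else psum c k)" for k
    using psum_move[OF m(1-3)] m(5) by simp
  have len: "length c' = length c" using m(5) by simp
  have n: "length c = length b" using assms(1) by (simp add: slideP_def)
  have "psum b k \<le> psum c' k" for k
    using assms(1) ps[of k] unfolding slideP_def by (metis trans_le_add1)
  moreover have "c' ! k \<noteq> 0 \<and> psum c' (Suc k) = psum b (Suc k)"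
    if "k < length b" "b ! k \<noteq> 0" for k
  proof -
    have inv: "c ! k \<noteq> 0" "psum c (Suc k) = psum b (Suc k)"
      using assms(1) that unfolding slideP_def by auto
    then have "k \<noteq> p" using m(2) by auto
    then show ?thesis using inv ps[of "Suc k"] m(4,5) that n
      by (cases "k = Suc p") auto
  qed
  moreover have "sum_list c' = sum_list c"
    using ps[of "length c"] m(1) len psum_ge[of c' "length c"] psum_ge[of c "length c"] by simp
  ultimately show ?thesis using assms(1) len unfolding slideP_def by simp
qed

lemma slides_sub: "(local_move b)\<^sup>*\<^sup>* b c \<Longrightarrow> slideP b c"
proof (induction rule: rtranclp_induct)
  case base then show ?case by (simp add: slideP_def)
next
  case (step y z) then show ?case using slideP_move by blast
qed

definition Phi :: "nat list \<Rightarrow> nat list \<Rightarrow> nat" where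
  "Phi b c = (\<Sum>k\<le>length b. psum c k)"

lemma slideP_back:
  assumes "slideP b c" "c \<noteq> b"
  shows "\<exists>c0. slideP b c0 \<and> local_move b c0 c \<and> Phi b c0 < Phi b c"
proof -
  have n: "length c = length b" "sum_list c = sum_list b" and ge: "\<And>k. psum b k \<le> psum c k"
    using assms(1) by (auto simp: slideP_def)
  have "\<exists>k. psum c k \<noteq> psum b k" using assms(2) psum_eq_list[of c b] n by auto
  then obtain k where k: "psum c k \<noteq> psum b k" "\<And>k'. k' < k \<Longrightarrow> psum c k' = psum b k'"
    using exists_least_iff[of "\<lambda>k. psum c k \<noteq> psum b k"] by blast
  have "k \<noteq> 0" using k(1) by (metis psum_0)
  then obtain p where kp: "k = Suc p" by (cases k) auto
  have eqp: "psum c p = psum b p" using k(2) kp by simp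
  have gt: "psum c (Suc p) > psum b (Suc p)" using k(1) ge[of k] kp by simp
  have pl: "Suc p < length c"
  proof (rule ccontr)
    assume "\<not> Suc p < length c"
    then have "psum c (Suc p) = sum_list c" "psum b (Suc p) = sum_list b"
      using psum_ge n by auto
    then show False using gt n by simp
  qed
  have cs: "psum c (Suc p) = psum c p + c ! p" using psum_Suc pl by simp
  have bs: "psum b (Suc p) = psum b p + b ! p" using psum_Suc pl n by simp
  have bp: "b ! p = 0"
  proof (rule ccontr)
    assume "b ! p \<noteq> 0"
    then have "psum c (Suc p) = psum b (Suc p)" using assms(1) pl n unfolding slideP_def by auto
    then show False using gt by simp
  qed
  have cp: "c ! p > 0" using cs bs bp eqp gt by simp
  define c0 where "c0 = c[p := 0, Suc p := c ! p + c ! Suc p]"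
  have l0: "length c0 = length c" by (simp add: c0_def)
  have c0p: "c0 ! p = 0" "c0 ! Suc p = c ! p + c ! Suc p" using pl by (auto simp: c0_def)
  have cc0: "c = c0[p := c ! p, Suc p := c ! Suc p]"
    by (simp add: c0_def list_update_swap)
  have ps: "psum c k = (if k = Suc p then psum c0 k + c ! p else psum c0 k)" for k
    using psum_move[of p c0 "c ! p" "c ! Suc p" k] pl l0 c0p cc0 by simp
  have mv: "local_move b c0 c"
    unfolding local_move_def
  proof (intro exI conjI)
    show "Suc p < length c0" using pl l0 by simp
    show "c0 ! p = 0" by (rule c0p(1))
    show "c ! p + c ! Suc p = c0 ! Suc p" using c0p(2) by simp
    show "b ! Suc p \<noteq> 0 \<longrightarrow> 0 < c ! Suc p" using assms(1) pl n unfolding slideP_def by auto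
    show "c = c0[p := c ! p, Suc p := c ! Suc p]" by (rule cc0)
  qed
  have "slideP b c0"
    unfolding slideP_def
  proof (intro conjI allI impI)
    show "length c0 = length b" using l0 n by simp
    fix i
    show "psum b i \<le> psum c0 i"
    proof (cases "i = Suc p")
      case True then show ?thesis using ps[of i] cs eqp bs bp by simp
    next
      case False then show ?thesis using ps[of i] ge[of i] by simp
    qed
  next
    fix i assume i: "i < length b" "b ! i \<noteq> 0"
    then have inv: "c ! i \<noteq> 0" "psum c (Suc i) = psum b (Suc i)"
      using assms(1) unfolding slideP_def by auto
    have "i \<noteq> p" using i bp by auto
    then have "c0 ! i \<noteq> 0 \<and> psum c0 (Suc i) = psum b (Suc i)"
      using inv ps[of "Suc i"] cp i(1) n(1) by (cases "i = Suc p") (auto simp: c0_def nth_list_update)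
    then show "c0 ! i \<noteq> 0" "psum c0 (Suc i) = psum b (Suc i)" by auto
  next
    have "psum c0 (length c) = psum c (length c)" using ps[of "length c"] pl by auto
    then show "sum_list c0 = sum_list b" using psum_ge[of c0 "length c"] psum_ge[of c "length c"] l0 n
      by simp
  qed
  moreover have "Phi b c = Phi b c0 + c ! p"
  proof -
    have "Phi b c = (\<Sum>k\<le>length b. psum c0 k + (if k = Suc p then c ! p else 0))"
      unfolding Phi_def by (rule sum.cong) (auto simp: ps)
    also have "\<dots> = Phi b c0 + c ! p" using pl n
      by (simp add: sum.distrib Phi_def)
    finally show ?thesis .
  qed
  ultimately show ?thesis using mv cp by auto
qed

lemma slides_sup: "slideP b c \<Longrightarrow> (local_move b)\<^sup>*\<^sup>* b c"
proof (induction "Phi b c" arbitrary: c rule: less_induct)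
  case less
  show ?case
  proof (cases "c = b")
    case True then show ?thesis by simp
  next
    case False
    then obtain c0 where "slideP b c0" "local_move b c0 c" "Phi b c0 < Phi b c"
      using slideP_back less.prems by blast
    then show ?thesis using less.hyps by (meson rtranclp.rtrancl_into_rtrancl)
  qed
qed

lemma fixed_slides_char: "c \<in> fixed_slides b \<longleftrightarrow> slideP b c"
  unfolding fixed_slides_def using slides_sub slides_sup by blast


lemma dominates_psum: "dominates b a \<longleftrightarrow> (\<forall>i. psum a i \<le> psum b i)"
  by (simp add: dominates_def psum_def)

lemma F_char: "c \<in> fund_slide_set a \<longleftrightarrow> length c = length a \<and> (\<forall>i. psum a i \<le> psum c i) \<and>
   sum_list c = sum_list a \<and> PS a \<subseteq> PS c"
  by (auto simp: fund_slide_set_def dominates_psum refines_flat_iff)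

lemma pos_PS_eq:
  assumes "\<forall>v\<in>set al. v > 0" "\<forall>v\<in>set be. v > 0" "PS al = PS be"
  shows "al = be"
  using assms
proof (induction al arbitrary: be)
  case Nil
  show ?case
  proof (cases be)
    case (Cons y ys)
    have "y \<in> PS be" using Cons psum_in_PS[of be 1] by simp
    then have "y \<in> PS []" using Nil.prems(3) by simp
    moreover have "PS [] = {0}" by (auto simp: PS_def psum_def)
    ultimately show ?thesis using Nil.prems(2) Cons by simp
  qed simp
next
  case (Cons x al')
  have nz: "v \<in> insert 0 ((+) z ` S) \<Longrightarrow> v \<noteq> 0 \<Longrightarrow> z \<le> v" for v z :: nat and S by auto
  obtain y be' where be: "be = y # be'"
  proof (cases be)
    case Nil
    have "x \<in> PS (x # al')" using psum_in_PS[of "x # al'" 1] by simp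
    then have "x \<in> PS []" using Cons.prems(3) Nil by simp
    moreover have "PS [] = {0}" by (auto simp: PS_def psum_def)
    ultimately show ?thesis using Cons.prems(1) by simp
  qed
  have x0: "x > 0" and y0: "y > 0" using Cons.prems(1,2) be by auto
  have P: "insert 0 ((+) x ` PS al') = insert 0 ((+) y ` PS be')"
    using Cons.prems(3) be by (simp add: PS_Cons)
  have "x \<in> insert 0 ((+) x ` PS al')" by (metis add_0_right imageI insertI2 zero_in_PS)
  then have "y \<le> x" using P nz[of x y "PS be'"] x0 by simp
  moreover have "y \<in> insert 0 ((+) y ` PS be')" by (metis add_0_right imageI insertI2 zero_in_PS)
  then have "x \<le> y" using P nz[of y x "PS al'"] y0 by simp
  ultimately have xy: "x = y" by simp
  have "(+) x ` PS al' = (+) x ` PS be'"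
  proof -
    have "(+) x ` PS al' = insert 0 ((+) x ` PS al') - {0}" using x0 by auto
    also have "\<dots> = insert 0 ((+) x ` PS be') - {0}" using P xy by simp
    also have "\<dots> = (+) x ` PS be'" using x0 by auto
    finally show ?thesis .
  qed
  then have "PS al' = PS be'" by (simp add: inj_image_eq_iff)
  then have "al' = be'" using Cons.IH Cons.prems(1,2) be by simp
  then show ?case using xy be by simp
qed

lemma flat_eq_iff: "flat x = flat y \<longleftrightarrow> PS x = PS y"
  using pos_PS_eq[of "flat x" "flat y"] flat_pos by (metis PS_flat)

lemma PS_slide: "slideP b c \<Longrightarrow> psum b i \<in> PS c"
proof (induction i)
  case 0 then show ?case by simp
next
  case (Suc i)
  show ?case
  proof (cases "i < length b")
    case False
    then have "psum b (Suc i) = psum b i" using psum_ge by simp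
    then show ?thesis using Suc by simp
  next
    case True
    show ?thesis
    proof (cases "b ! i = 0")
      case True': True
      then have "psum b (Suc i) = psum b i" using psum_Suc[OF True] by simp
      then show ?thesis using Suc by simp
    next
      case False
      then have "psum b (Suc i) = psum c (Suc i)" using Suc.prems True unfolding slideP_def by auto
      then show ?thesis by simp
    qed
  qed
qed

lemma slide_le:
  assumes "PS b2 \<subseteq> PS b1" "slideP b1 c" "slideP b2 c"
  shows "psum b2 i \<le> psum b1 i"
proof (rule ccontr)
  assume "\<not> psum b2 i \<le> psum b1 i"
  then have lt: "psum b1 i < psum b2 i" by simp
  define v where "v = psum b2 i"
  have "v \<in> PS b1" using assms(1) psum_in_PS[of b2 i] unfolding v_def by blast
  then have "\<exists>k. psum b1 k = v" by (auto simp: PS_def)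
  then obtain k where k: "psum b1 k = v" "\<And>k'. k' < k \<Longrightarrow> psum b1 k' \<noteq> v"
    using exists_least_iff[of "\<lambda>k. psum b1 k = v"] by blast
  have ki: "i < k" using psum_mono[of k i b1] k lt v_def by (metis leD not_le_imp_less)
  then obtain k' where k': "k = Suc k'" by (cases k) auto
  have lk: "psum b1 k' < v" using k(2)[of k'] psum_mono[of k' k b1] k k' by fastforce
  have kl: "k' < length b1"
  proof (rule ccontr)
    assume "\<not> k' < length b1"
    then show False using psum_ge[of b1 k'] psum_ge[of b1 k] k' k lk by simp
  qed
  have "b1 ! k' \<noteq> 0" using psum_Suc[OF kl] k k' lk by auto
  then have inv: "c ! k' \<noteq> 0" "psum c (Suc k') = v"
    using assms(2) kl k k' unfolding slideP_def by auto
  have "length c = length b1" using assms(2) by (simp add: slideP_def)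
  then have "psum c k' < v" using psum_Suc[of k' c] kl inv by simp
  moreover have "psum c i \<le> psum c k'" using ki k' psum_mono by simp
  moreover have "v \<le> psum c i" using assms(3) v_def by (simp add: slideP_def)
  ultimately show False by simp
qed


lemma exists_b:
  assumes "c \<in> fund_slide_set a"
  shows "\<exists>b. length b = length a \<and> dominates b a \<and> flat b = flat a \<and> slideP b c"
proof -
  have c: "length c = length a" "\<And>i. psum a i \<le> psum c i" "sum_list c = sum_list a" "PS a \<subseteq> PS c"
    using assms by (auto simp: F_char)
  define n where "n = length a"
  define T where "T i = Max {p \<in> PS a. p \<le> psum c i}" for i
  have fin: "finite {p \<in> PS a. p \<le> psum c i}" for i by simp
  have ne: "0 \<in> {p \<in> PS a. p \<le> psum c i}" for i by simp
  have T1: "T i \<in> PS a \<and> T i \<le> psum c i" for i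
    unfolding T_def
    by (metis (no_types, lifting) Max_in empty_iff fin mem_Collect_eq ne)
  have T2: "p \<in> PS a \<Longrightarrow> p \<le> psum c i \<Longrightarrow> p \<le> T i" for p i
    unfolding T_def by (rule Max_ge[OF fin]) simp
  have Tmono: "i \<le> j \<Longrightarrow> T i \<le> T j" for i j
    using T1[of i] T2[of "T i" j] psum_mono[of i j c] by simp
  have T0: "T 0 = 0" using T1[of 0] by simp
  have Tmin: "T (min i n) = T i" for i
    unfolding T_def using psum_min[of c i] c(1) n_def by simp
  define b where "b = map (\<lambda>i. T (Suc i) - T i) [0..<n]"
  have tele: "(\<Sum>k<m. T (Suc k) - T k) = T m" for m
  proof (induction m)
    case 0 then show ?case using T0 by simp
  next
    case (Suc m) then show ?case using Tmono[of m "Suc m"] by simp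
  qed
  have Sb: "psum b i = T i" for i
  proof -
    have "psum b i = sum_list (map (\<lambda>i. T (Suc i) - T i) [0..<min i n])"
      by (simp add: psum_def b_def take_map min_def)
    also have "\<dots> = (\<Sum>k<min i n. T (Suc k) - T k)"
      by (simp add: sum_list_sum_nth atLeast0LessThan)
    also have "\<dots> = T i" using tele Tmin by simp
    finally show ?thesis .
  qed
  have lb: "length b = n" by (simp add: b_def)
  have dom: "dominates b a"
    unfolding dominates_psum Sb using T2 c(2) by simp
  have "PS b = PS a"
  proof
    show "PS b \<subseteq> PS a" using T1 by (auto simp: PS_def Sb)
    show "PS a \<subseteq> PS b"
    proof
      fix p assume p: "p \<in> PS a"
      then obtain j where j: "p = psum c j" using c(4) by (auto simp: PS_def)
      have "T j = p" using T1[of j] T2[OF p, of j] j by simp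
      then show "p \<in> PS b" by (metis Sb psum_in_PS)
    qed
  qed
  then have fl: "flat b = flat a" by (simp add: flat_eq_iff)
  have "slideP b c"
    unfolding slideP_def
  proof (intro conjI allI impI)
    show "length c = length b" using lb c(1) n_def by simp
    fix i show "psum b i \<le> psum c i" using T1 Sb by simp
  next
    have "sum_list c \<in> PS a" using c(3) psum_ge[of a "length a"] psum_in_PS[of a "length a"] by simp
    then have "T n = sum_list c" using T1[of n] T2[of "sum_list c" n] psum_ge[of c n] c(1) n_def by simp
    then show "sum_list c = sum_list b" using Sb[of n] psum_ge[of b n] lb by simp
  next
    fix i assume i: "i < length b" "b ! i \<noteq> 0"
    then have lt: "T i < T (Suc i)" using lb by (simp add: b_def)
    define p where "p = T (Suc i)"
    have "p \<in> PS a" using T1 p_def by simp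
    then obtain j where j: "p = psum c j" using c(4) by (auto simp: PS_def)
    have "\<not> p \<le> psum c i" using T2[of p i] lt p_def T1 by fastforce
    then have "i < j" using j psum_mono[of j i c] by (metis not_le_imp_less order.trans)
    then have "psum c (Suc i) \<le> p" using j psum_mono[of "Suc i" j c] by simp
    then have eq: "psum c (Suc i) = p" using T1[of "Suc i"] p_def by simp
    have il: "i < length c" using i lb c(1) n_def by simp
    show "c ! i \<noteq> 0" using psum_Suc[OF il] eq \<open>\<not> p \<le> psum c i\<close> by auto
    show "psum c (Suc i) = psum b (Suc i)" using eq Sb p_def by simp
  qed
  then show ?thesis using lb n_def dom fl by blast
qed

lemma sum_fun_apply: "finite A \<Longrightarrow> (\<Sum>b\<in>A. f b) x = (\<Sum>b\<in>A. f b x)"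
  by (induction A rule: finite_induct) auto

theorem proposition4p7:
  fixes a :: "nat list" and n :: nat
  assumes "length a = n"
  shows "fund_slide a =
    (\<Sum>b \<in> {b. length b = n \<and> dominates b a \<and> flat b = flat a}. lock b)"
proof
  fix c
  define B where "B = {b. length b = n \<and> dominates b a \<and> flat b = flat a}"
  have finB: "finite B"
  proof (rule finite_subset)
    show "B \<subseteq> {xs. set xs \<subseteq> {..sum_list a} \<and> length xs = n}"
    proof
      fix b assume "b \<in> B"
      then have "sum_list b = sum_list a" "length b = n" using sum_flat[of b] sum_flat[of a]
        by (auto simp: B_def)
      then show "b \<in> {xs. set xs \<subseteq> {..sum_list a} \<and> length xs = n}"
        using member_le_sum_list[of _ b] by auto
    qed
    show "finite {xs. set xs \<subseteq> {..sum_list a} \<and> length xs = n}"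
      by (rule finite_lists_length_eq) simp
  qed
  have "(\<Sum>b\<in>B. lock b) c = (\<Sum>b\<in>B. lock b c)" by (rule sum_fun_apply[OF finB])
  also have "\<dots> = (\<Sum>b\<in>B. if slideP b c then 1 else 0)"
    by (simp add: lock_def monomial_sum_def fixed_slides_char)
  also have "\<dots> = (\<Sum>b\<in>{b \<in> B. slideP b c}. 1)"
    using finB by (rule sum.inter_filter[symmetric])
  also have "\<dots> = of_nat (card {b \<in> B. slideP b c})"
    by simp
  also have "\<dots> = fund_slide a c"
  proof (cases "c \<in> fund_slide_set a")
    case True
    obtain b where b: "b \<in> B" "slideP b c" using exists_b[OF True] assms by (auto simp: B_def)
    have "{b \<in> B. slideP b c} = {b}"
    proof (intro set_eqI iffI)
      fix b' assume "b' \<in> {b \<in> B. slideP b c}"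
      then have b': "b' \<in> B" "slideP b' c" by auto
      have PSe: "PS b = PS b'" using b(1) b'(1) by (simp add: B_def flat_eq_iff)
      have "psum b i = psum b' i" for i
      proof -
        have "psum b' i \<le> psum b i" using slide_le[of b' b c i] PSe b(2) b'(2) by simp
        moreover have "psum b i \<le> psum b' i" using slide_le[of b b' c i] PSe b(2) b'(2) by simp
        ultimately show ?thesis by simp
      qed
      then have "b = b'" using psum_eq_list[of b b'] b(1) b'(1) by (simp add: B_def)
      then show "b' \<in> {b}" by simp
    qed (use b in auto)
    then show ?thesis using True by (simp add: fund_slide_def monomial_sum_def)
  next
    case False
    have "{b \<in> B. slideP b c} = {}"
    proof (rule ccontr)
      assume "{b \<in> B. slideP b c} \<noteq> {}"
      then obtain b where b: "b \<in> B" "slideP b c" by auto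
      have "length c = length a" using b assms by (simp add: B_def slideP_def)
      moreover have "psum a i \<le> psum c i" for i
      proof -
        have "psum a i \<le> psum b i" using b(1) by (simp add: B_def dominates_psum)
        moreover have "psum b i \<le> psum c i" using b(2) by (simp add: slideP_def)
        ultimately show ?thesis by simp
      qed
      moreover have "sum_list c = sum_list a" using b sum_flat[of b] sum_flat[of a]
        by (auto simp: B_def slideP_def)
      moreover have "PS a \<subseteq> PS c"
      proof -
        have "PS a = PS b" using b(1) by (simp add: B_def flat_eq_iff)
        moreover have "PS b \<subseteq> PS c" unfolding PS_def[of b] using PS_slide[OF b(2)] by blast
        ultimately show ?thesis by simp
      qed
      ultimately have "c \<in> fund_slide_set a" by (simp add: F_char)
      then show False using False by simp
    qed
    then show ?thesis using False unfolding fund_slide_def monomial_sum_def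
      by (metis card.empty of_nat_0)
  qed
  finally show "fund_slide a c = (\<Sum>b \<in> {b. length b = n \<and> dominates b a \<and> flat b = flat a}. lock b) c"
    unfolding B_def by simp
qed

end
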